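(* Let $g=\frac{\sqrt5-1}2$, $g\le\alpha<\beta\le1$, $(x,y)\in\Omega_\alpha$, $(\tilde x,\tilde y)\in S(x,y)$, and $(x_n,y_n)=\mathcal T_\alpha^n(x,y)$ for some $n\ge1$. If $\tilde x\in[\beta-1,\beta)$ and $y_n<1-\frac1{\sqrt2}$, then there is some $k\ge1$ such that $\mathcal T_\beta^k(\tilde x,\tilde y)\in S(x_n,y_n)$.
   Context: For $\alpha\in[\tfrac12,1]$: $T_\alpha(x)=\frac1x-\lfloor\frac1x+1-\alpha\rfloor$ on $[\alpha-1,\alpha)\setminus\{0\}$, $T_\alpha(0)=0$; $\mathcal T_\alpha(x,y)=\left(T_\alpha(x),\frac{1}{y+\lfloor\frac1x+1-\alpha\rfloor}\right)$ for $x\ne0$, $\mathcal T_\alpha(0,y)=(0,0)$; $\Omega_\alpha=\bigcup_{n\ge0}\overline{\mathcal T_\alpha^n([\alpha-1,\alpha)\times\{0\})}$. For a point $(x,y)$, $S(x,y)=\{(x,y),(-x,-y),(x+1,\frac{y}{1-y}),(1-x,\frac{-y}{y+1})\}$. *)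

theory Defs
  imports "HOL-Analysis.Analysis"
begin

text \<open>Nakada's alpha-continued fraction map. The formula is used for every nonzero real;
  the relevant domain is [alpha-1, alpha), which the iterates never leave.\<close>
definition Tmap :: "real \<Rightarrow> real \<Rightarrow> real" where
  "Tmap a x = (if x = 0 then 0 else 1 / x - of_int \<lfloor>1 / x + 1 - a\<rfloor>)"

definition NatExt :: "real \<Rightarrow> real \<times> real \<Rightarrow> real \<times> real" where
  "NatExt a p = (let x = fst p; y = snd p in
     if x = 0 then (0, 0) else (Tmap a x, 1 / (y + of_int \<lfloor>1 / x + 1 - a\<rfloor>)))"

definition Omega :: "real \<Rightarrow> (real \<times> real) set" where
  "Omega a = (\<Union>n. closure ((NatExt a ^^ n) ` ({a - 1..<a} \<times> {0})))"

definition Sset :: "real \<times> real \<Rightarrow> (real \<times> real) set" where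
  "Sset p = (let x = fst p; y = snd p in
     {(x, y), (-x, -y), (x + 1, y / (1 - y)), (1 - x, - y / (y + 1))})"

end

theory Submission
  imports Defs
begin

lemma NE_eq: "x \<noteq> 0 \<Longrightarrow> NatExt c (x,y) = (1/x - of_int \<lfloor>1/x+1-c\<rfloor>, 1/(y + of_int \<lfloor>1/x+1-c\<rfloor>))"
  by (simp add: NatExt_def Tmap_def Let_def)

lemma NE0: "NatExt c (0,y) = (0,0)"
  by (simp add: NatExt_def)

lemma NE_digit:
  assumes "x \<noteq> 0" "of_int e \<le> 1/x+1-c" "1/x+1-c < of_int e + 1"
  shows "NatExt c (x,y) = (1/x - of_int e, 1/(y + of_int e))"
proof -
  have "\<lfloor>1/x+1-c\<rfloor> = e" using assms(2,3) by (simp add: floor_eq_iff)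
  thus ?thesis using NE_eq[OF assms(1)] by simp
qed

lemma digit_bounds:
  fixes x c :: real
  shows "of_int \<lfloor>1/x+1-c\<rfloor> \<le> 1/x+1-c" "1/x+1-c < of_int \<lfloor>1/x+1-c\<rfloor> + 1"
  by linarith+

lemma NE_range:
  assumes "0 < c" "c \<le> 1"
  shows "c - 1 \<le> fst (NatExt c p) \<and> fst (NatExt c p) < c"
proof (cases "fst p = 0")
  case True
  then show ?thesis using assms by (cases p) (simp add: NE0)
next
  case False
  obtain x y where p: "p = (x,y)" by (cases p)
  have "x \<noteq> 0" using False p by simp
  have e: "NatExt c p = (1/x - of_int \<lfloor>1/x+1-c\<rfloor>, 1/(y + of_int \<lfloor>1/x+1-c\<rfloor>))"
    using p NE_eq[of x c y] \<open>x \<noteq> 0\<close> by simp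
  have "of_int \<lfloor>1/x+1-c\<rfloor> \<le> 1/x+1-c" "1/x+1-c < of_int \<lfloor>1/x+1-c\<rfloor> + 1"
    by (rule digit_bounds)+
  thus ?thesis unfolding e fst_conv by linarith
qed

lemma S_mem: "(u,v) \<in> Sset (p,q) \<longleftrightarrow> (u,v) = (p,q) \<or> (u,v) = (-p,-q) \<or> (u,v) = (p+1, q/(1-q)) \<or> (u,v) = (1-p, -q/(q+1))"
  by (auto simp: Sset_def Let_def)

lemma rneg: "(u::real) \<le> v \<Longrightarrow> v < 0 \<Longrightarrow> 1/v \<le> 1/u"
  using le_imp_inverse_le_neg[of u v] by (simp add: inverse_eq_divide)

lemma rneg': "(u::real) \<le> - v \<Longrightarrow> 0 < v \<Longrightarrow> -(1/v) \<le> 1/u"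
  using rneg[of u "-v"] by simp

lemma rpos: "0 < (u::real) \<Longrightarrow> u \<le> v \<Longrightarrow> 1/v \<le> 1/u"
  using le_imp_inverse_le[of u v] by (simp add: inverse_eq_divide)

definition D :: "real \<Rightarrow> (real \<times> real) set" where
  "D a = {p. a - 1 \<le> fst p \<and> fst p \<le> a \<and> 1 - sqrt 2 \<le> snd p \<and> snd p \<le> sqrt 2
        \<and> (0 \<le> fst p \<or> snd p \<le> 2 - sqrt 2) \<and> (fst p \<le> 1/2 \<or> 1/sqrt 2 - 1 \<le> snd p)}"

lemma closed_D: "closed (D a)"
  unfolding D_def
  by (intro closed_Collect_conj closed_Collect_disj closed_Collect_le continuous_intros)

lemma s2_facts: "sqrt 2 * sqrt 2 = 2" "141/100 < sqrt 2" "sqrt 2 < 142/100" "1/sqrt 2 < 1"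
proof -
  show "1/sqrt 2 < 1" by simp
  show "sqrt 2 * sqrt 2 = 2" by simp
  show "141/100 < sqrt 2" by (rule real_less_rsqrt) (simp add: power2_eq_square)
  show "sqrt 2 < 142/100"
  proof (rule ccontr)
    assume "\<not> sqrt 2 < 142/100"
    hence "142/100 * (142/100) \<le> sqrt 2 * sqrt 2" by (intro mult_mono) auto
    thus False by simp
  qed
qed

lemma g_facts:
  assumes "(sqrt 5 - 1)/2 \<le> a"
  shows "0.6 < a" "1 \<le> a + a*a"
proof -
  have s5: "sqrt 5 * sqrt 5 = 5" by simp
  have "2.2 < sqrt 5" by (rule real_less_rsqrt) (simp add: power2_eq_square)
  hence "0.6 < (sqrt 5 - 1)/2" by simp
  thus "0.6 < a" using assms by linarith
  have "0 \<le> sqrt 5" by simp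
  let ?g = "(sqrt 5 - 1)/2"
  have "?g + ?g * ?g = 1" using s5 by (simp add: field_simps)
  moreover have "?g * ?g \<le> a * a" using assms \<open>2.2 < sqrt 5\<close> by (intro mult_mono) auto
  ultimately show "1 \<le> a + a*a" using assms by linarith
qed

lemma D_mem: "(x,y) \<in> D a \<longleftrightarrow> a - 1 \<le> x \<and> x \<le> a \<and> 1 - sqrt 2 \<le> y \<and> y \<le> sqrt 2
        \<and> (0 \<le> x \<or> y \<le> 2 - sqrt 2) \<and> (x \<le> 1/2 \<or> 1/sqrt 2 - 1 \<le> y)"
  by (simp add: D_def)

lemma neg_digit:
  assumes g: "(sqrt 5 - 1)/2 \<le> a" and "a < 1" "a - 1 \<le> x" "x < 0"
  shows "1/x < -5/2" "\<lfloor>1/x+1-a\<rfloor> \<le> -3"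
proof -
  have a6: "0.6 < a" using g_facts[OF g] by simp
  have "1/x \<le> 1/(a-1)" using assms by (intro rneg) auto
  moreover have "1/(a-1) < -5/2" using a6 \<open>a<1\<close> by (simp add: field_simps)
  ultimately show "1/x < -5/2" by linarith
  hence "1/x+1-a < -2" using a6 by linarith
  thus "\<lfloor>1/x+1-a\<rfloor> \<le> -3" by linarith
qed

lemma pos_digit:
  assumes g: "(sqrt 5 - 1)/2 \<le> a" and "a < 1" "0 < x" "x \<le> a"
  shows "1 < 1/x" "1 \<le> \<lfloor>1/x+1-a\<rfloor>"
proof -
  have "1 < 1/x" using assms by (simp add: field_simps)
  thus "1 < 1/x" .
  hence "1 \<le> 1/x+1-a" using assms by linarith
  thus "1 \<le> \<lfloor>1/x+1-a\<rfloor>" by linarith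
qed

lemma D_inv:
  assumes g: "(sqrt 5 - 1)/2 \<le> a" and a1: "a < 1" and p: "p \<in> D a"
  shows "NatExt a p \<in> D a"
proof -
  obtain x y where pxy: "p = (x,y)" by (cases p)
  have a6: "0.6 < a" using g_facts[OF g] by simp
  note s2 = s2_facts
  have Dx: "a - 1 \<le> x" "x \<le> a" "1 - sqrt 2 \<le> y" "y \<le> sqrt 2" "0 \<le> x \<or> y \<le> 2 - sqrt 2"
     "x \<le> 1/2 \<or> 1/sqrt 2 - 1 \<le> y" using p pxy by (auto simp: D_mem)
  show ?thesis
  proof (cases "x = 0")
    case True
    then show ?thesis using pxy a6 a1 s2 by (simp add: NE0 D_mem)
  next
    case False
    define d where "d = \<lfloor>1/x+1-a\<rfloor>"
    have NE: "NatExt a p = (1/x - d, 1/(y+d))" using NE_eq[OF False] pxy d_def by simp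
    have db: "of_int d \<le> 1/x+1-a" "1/x+1-a < of_int d + 1" unfolding d_def by linarith+
    have r1: "a - 1 \<le> 1/x - d" "1/x - d \<le> a" using db by linarith+
    have i2: "1/sqrt 2 - 1 = -1/(2 + sqrt 2)" "2 - sqrt 2 = 1/(1 + 1/sqrt 2)" "1 - sqrt 2 = -1/(1+sqrt 2)"
      using s2 by (simp_all add: field_simps)
    show ?thesis
    proof (cases "x < 0")
      case True
      have d3: "d \<le> -3" "1/x < -5/2" using neg_digit[OF g a1 Dx(1) True] d_def by auto
      have yle: "y \<le> 2 - sqrt 2" using Dx(5) True by auto
      have neg: "y + d \<le> -1 - sqrt 2" using d3 yle by linarith
      have s0: "0 < 1 + sqrt 2" using s2 by linarith
      have "-1/(1+sqrt 2) \<le> 1/(y+d)" using rneg'[of "y+d" "1 + sqrt 2"] neg s0 by simp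
      hence y1: "1 - sqrt 2 \<le> 1/(y+d)" using i2(3) by simp
      have y2: "1/(y+d) < 0" using neg s2 by (simp add: divide_less_0_iff)
      have y3: "1/2 < 1/x - d \<Longrightarrow> 1/sqrt 2 - 1 \<le> 1/(y+d)"
      proof -
        assume "1/2 < 1/x - d"
        hence "d \<le> -4" using d3 by linarith
        hence n4: "y + d \<le> -(2 + sqrt 2)" using yle by linarith
        have "0 < 2 + sqrt 2" using s2 by linarith
        hence "-1/(2+sqrt 2) \<le> 1/(y+d)" using rneg'[OF n4] by simp
        thus ?thesis using i2(1) by simp
      qed
      define X where "X = 1/x - d"
      define Y where "Y = 1/(y+d)"
      have XY: "NatExt a p = (X, Y)" unfolding NE X_def Y_def ..
      have y3': "1/x - d \<le> 1/2 \<or> 1/sqrt 2 - 1 \<le> 1/(y+d)" using y3 by (cases "1/2 < 1/x - d") auto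
      have "(X, Y) \<in> D a" unfolding D_mem using r1 y1 y2 y3' s2 unfolding X_def[symmetric] Y_def[symmetric] by auto
      thus ?thesis using XY by simp
    next
      case False
      hence xp: "0 < x" using \<open>x \<noteq> 0\<close> by simp
      have d1: "1 \<le> d" "1 < 1/x" using pos_digit[OF g a1 xp Dx(2)] d_def by auto
      have "(1::real) \<le> of_int d" using d1 by simp
      hence pos: "0 < y + d" using Dx(3) s2 by linarith
      have y1: "0 < 1/(y+d)" using pos by simp
      have y2: "1/(y+d) \<le> sqrt 2 \<and> (1/x - d < 0 \<longrightarrow> 1/(y+d) \<le> 2 - sqrt 2)"
      proof (cases "d = 1")
        case True
        hence "1/x < 1 + a" using db by simp
        hence "1/(1+a) < x" using xp a6 by (simp add: field_simps)
        moreover have "1/2 \<le> 1/(1+a)" using a1 a6 by (simp add: field_simps)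
        ultimately have "1/sqrt 2 - 1 \<le> y" using Dx(6) by linarith
        hence "1/sqrt 2 \<le> y + d" using True by simp
        moreover have "0 < 1 / sqrt 2" by simp
        ultimately have "1/(y+d) \<le> 1/(1/sqrt 2)" by (intro rpos)
        moreover have "0 < 1/x - d" using True d1 by simp
        ultimately show ?thesis by simp
      next
        case False
        hence d2: "2 \<le> d" using d1 by simp
        have "3 - sqrt 2 \<le> y + d" using Dx(3) d2 by linarith
        moreover have "0 < 3 - sqrt 2" using s2 by linarith
        ultimately have "1/(y+d) \<le> 1/(3 - sqrt 2)" by (intro rpos)
        moreover have "1/(3 - sqrt 2) \<le> 1" using s2 by (simp add: field_simps)
        ultimately have A: "1/(y+d) \<le> sqrt 2" using s2 by linarith
        have B: "1/(y+d) \<le> 2 - sqrt 2" if "1/x - d < 0"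
        proof (cases "d = 2")
          case True
          hence "1/x < 2" using that by simp
          hence "1/2 < x" using xp by (simp add: field_simps)
          hence "1/sqrt 2 - 1 \<le> y" using Dx(6) by linarith
          hence "1 + 1/sqrt 2 \<le> y + d" using True by simp
          moreover have "0 < 1 + 1/sqrt 2" by (simp add: add_pos_pos)
          ultimately have "1/(y+d) \<le> 1/(1 + 1/sqrt 2)" by (intro rpos)
          thus ?thesis using i2(2) by simp
        next
          case False
          hence "3 \<le> d" using d2 by simp
          hence "4 - sqrt 2 \<le> y + d" using Dx(3) by linarith
          moreover have "0 < 4 - sqrt 2" using s2 by linarith
          ultimately have "1/(y+d) \<le> 1/(4 - sqrt 2)" by (intro rpos)
          moreover have "1/(4 - sqrt 2) \<le> 2 - sqrt 2"
          proof -
            have "1 \<le> (2 - sqrt 2) * (4 - sqrt 2)" using s2 by (simp add: algebra_simps)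
            thus ?thesis using \<open>0 < 4 - sqrt 2\<close> by (simp add: field_simps)
          qed
          ultimately show ?thesis by linarith
        qed
        show ?thesis using A B by blast
      qed
      define X where "X = 1/x - d"
      define Y where "Y = 1/(y+d)"
      have XY: "NatExt a p = (X, Y)" unfolding NE X_def Y_def ..
      have y0: "1/sqrt 2 - 1 \<le> 1/(y+d)" using y1 s2_facts(4) by linarith
      have q1: "1 - sqrt 2 \<le> Y" using y1 s2 unfolding Y_def by linarith
      have q2: "0 \<le> X \<or> Y \<le> 2 - sqrt 2" using y2 unfolding X_def Y_def by linarith
      have q3: "X \<le> 1/2 \<or> 1/sqrt 2 - 1 \<le> Y" using y0 unfolding Y_def by simp
      have "(X, Y) \<in> D a" unfolding D_mem using r1 q1 q2 q3 y2 unfolding X_def[symmetric] Y_def[symmetric] by blast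
      thus ?thesis using XY by simp
    qed
  qed
qed

lemma Omega_D:
  assumes g: "(sqrt 5 - 1)/2 \<le> a" and a1: "a < 1"
  shows "Omega a \<subseteq> D a"
proof -
  have a6: "0.6 < a" using g_facts[OF g] by simp
  have "(NatExt a ^^ n) ` ({a - 1..<a} \<times> {0}) \<subseteq> D a" for n
  proof (induction n)
    case 0
    then show ?case using a6 s2_facts by (auto simp: D_mem)
  next
    case (Suc n)
    show ?case
    proof
      fix v assume "v \<in> (NatExt a ^^ Suc n) ` ({a - 1..<a} \<times> {0})"
      then obtain u where u: "u \<in> {a - 1..<a} \<times> {0}" "v = NatExt a ((NatExt a ^^ n) u)" by auto
      have "(NatExt a ^^ n) u \<in> D a" using Suc u(1) by blast
      thus "v \<in> D a" using u(2) D_inv[OF g a1] by simp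
    qed
  qed
  hence "closure ((NatExt a ^^ n) ` ({a - 1..<a} \<times> {0})) \<subseteq> D a" for n
    by (intro closure_minimal closed_D)
  thus ?thesis unfolding Omega_def by blast
qed


lemma alg3: "1/(-(u::real) - v) = -(1/(u+v))"
proof -
  have "-u - v = -(u+v)" by simp
  thus ?thesis by (simp only: divide_minus_right)
qed

lemma alg1: "(u::real) \<noteq> 0 \<Longrightarrow> (1/u)/(1 - 1/u) = 1/(u-1)"
  by (cases "u = 1") (simp_all add: field_simps)

lemma alg2: "(u::real) \<noteq> 0 \<Longrightarrow> -(1/u)/(1/u+1) = 1/(-u-1)"
proof (cases "u = -1")
  case True thus ?thesis by simp
next
  case False
  assume "u \<noteq> 0"
  hence "1/u + 1 = (1+u)/u" by (simp add: field_simps)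
  moreover have "-u-1 = -(1+u)" by simp
  moreover have "1+u \<noteq> 0" using False by linarith
  ultimately show ?thesis using \<open>u\<noteq>0\<close> by (simp add: field_simps)
qed

lemma case0:
  assumes ab: "a < b" "b \<le> a + 1" and nz: "x \<noteq> 0 \<Longrightarrow> y + of_int \<lfloor>1/x+1-a\<rfloor> \<noteq> 0"
  shows "NatExt b (x,y) \<in> Sset (NatExt a (x,y))"
proof (cases "x = 0")
  case True thus ?thesis by (simp add: NE0 Sset_def Let_def)
next
  case False
  define d where "d = \<lfloor>1/x+1-a\<rfloor>"
  have db: "of_int d \<le> 1/x+1-a" "1/x+1-a < of_int d + 1" unfolding d_def by linarith+
  have NA: "NatExt a (x,y) = (1/x - d, 1/(y+d))" using NE_eq[OF False] d_def by simp
  have u: "y + d \<noteq> 0" using nz False d_def by simp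
  show ?thesis
  proof (cases "b - 1 \<le> 1/x - d")
    case True
    have "NatExt b (x,y) = (1/x - d, 1/(y+d))"
      by (rule NE_digit) (use False True db ab in linarith)+
    thus ?thesis unfolding NA by (simp add: S_mem)
  next
    case c2: False
    have "NatExt b (x,y) = (1/x - of_int (d-1), 1/(y + of_int (d-1)))"
      by (rule NE_digit) (use False c2 db ab in \<open>simp; linarith\<close>)+
    also have "\<dots> = ((1/x - d) + 1, (1/(y+d))/(1 - 1/(y+d)))"
      using alg1[OF u] by (simp add: algebra_simps)
    finally show ?thesis unfolding NA by (simp add: S_mem)
  qed
qed

lemma case1:
  assumes ab: "a < b" "b \<le> 1" "1 < a + b" and x: "x \<noteq> 0" and u: "y + of_int \<lfloor>1/x+1-a\<rfloor> \<noteq> 0"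
  shows "NatExt b (-x,-y) \<in> Sset (NatExt a (x,y))"
proof -
  define d where "d = \<lfloor>1/x+1-a\<rfloor>"
  have db: "of_int d \<le> 1/x+1-a" "1/x+1-a < of_int d + 1" unfolding d_def by linarith+
  have NA: "NatExt a (x,y) = (1/x - d, 1/(y+d))" using NE_eq[OF x] d_def by simp
  have u: "y + d \<noteq> 0" using u d_def by simp
  have mx: "-x \<noteq> 0" "1/(-x) = -(1/x)" using x by simp_all
  show ?thesis
  proof (cases "1/x - d \<le> 1 - b")
    case True
    have "NatExt b (-x,-y) = (1/(-x) - of_int (-d), 1/(-y + of_int (-d)))"
      by (rule NE_digit) (use mx True db ab in \<open>simp; linarith\<close>)+
    also have "\<dots> = (-(1/x - d), -(1/(y+d)))"
      using mx by (simp add: alg3)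
    finally show ?thesis unfolding NA by (simp add: S_mem)
  next
    case c2: False
    have "NatExt b (-x,-y) = (1/(-x) - of_int (-d-1), 1/(-y + of_int (-d-1)))"
      by (rule NE_digit) (use mx c2 db ab in \<open>simp; linarith\<close>)+
    also have "\<dots> = (1 - (1/x - d), -(1/(y+d))/(1/(y+d)+1))"
      using mx alg2[OF u] by (simp add: algebra_simps)
    finally show ?thesis unfolding NA by (simp add: S_mem)
  qed
qed

lemma L2:
  assumes ab: "a < b" "b \<le> 1" "1 < a + b" and x: "x \<noteq> 0" "1 + x \<noteq> 0"
    and u: "y + of_int \<lfloor>1/x+1-a\<rfloor> \<noteq> 0"
  shows "NatExt b (-x/(1+x), 1-y) \<in> Sset (NatExt a (x,y))"
proof -
  define d where "d = \<lfloor>1/x+1-a\<rfloor>"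
  have db: "of_int d \<le> 1/x+1-a" "1/x+1-a < of_int d + 1" unfolding d_def by linarith+
  have NA: "NatExt a (x,y) = (1/x - d, 1/(y+d))" using NE_eq[OF x(1)] d_def by simp
  have u: "y + d \<noteq> 0" using u d_def by simp
  have mx: "-x/(1+x) \<noteq> 0" "1/(-x/(1+x)) = -(1/x) - 1" using x by (simp_all add: field_simps)
  show ?thesis
  proof (cases "1/x - d \<le> 1 - b")
    case True
    have "NatExt b (-x/(1+x), 1-y) = (1/(-x/(1+x)) - of_int (-d-1), 1/(1-y + of_int (-d-1)))"
      by (rule NE_digit) (use mx True db ab in \<open>simp only: mx; simp; linarith\<close>)+
    also have "\<dots> = (-(1/x - d), -(1/(y+d)))"
      unfolding mx(2) by (simp add: alg3)
    finally show ?thesis unfolding NA by (simp add: S_mem)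
  next
    case c2: False
    have "NatExt b (-x/(1+x), 1-y) = (1/(-x/(1+x)) - of_int (-d-2), 1/(1-y + of_int (-d-2)))"
      by (rule NE_digit) (use mx c2 db ab in \<open>simp only: mx; simp; linarith\<close>)+
    also have "\<dots> = (1 - (1/x - d), -(1/(y+d))/(1/(y+d)+1))"
      unfolding mx(2) using alg2[OF u] by (simp add: algebra_simps)
    finally show ?thesis unfolding NA by (simp add: S_mem)
  qed
qed


lemma nzD:
  assumes g: "(sqrt 5 - 1)/2 \<le> a" and a1: "a < 1" and p: "(x,y) \<in> D a" and x: "x \<noteq> 0"
  shows "y + of_int \<lfloor>1/x+1-a\<rfloor> \<noteq> 0"
proof -
  have Dx: "a - 1 \<le> x" "x \<le> a" "1 - sqrt 2 \<le> y" "y \<le> sqrt 2" "0 \<le> x \<or> y \<le> 2 - sqrt 2"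
    using p by (auto simp: D_mem)
  note s2 = s2_facts
  show ?thesis
  proof (cases "x < 0")
    case True
    have "\<lfloor>1/x+1-a\<rfloor> \<le> -3" using neg_digit[OF g a1 Dx(1) True] by simp
    hence "of_int \<lfloor>1/x+1-a\<rfloor> \<le> (-3::real)" by linarith
    thus ?thesis using Dx(5) True s2 by linarith
  next
    case False
    hence "0 < x" using x by simp
    hence "1 \<le> \<lfloor>1/x+1-a\<rfloor>" using pos_digit[OF g a1 _ Dx(2)] by simp
    hence "(1::real) \<le> of_int \<lfloor>1/x+1-a\<rfloor>" by linarith
    thus ?thesis using Dx(3) s2 by linarith
  qed
qed

lemma NE_shift:
  assumes "w \<noteq> 0" "v \<noteq> 0" "1/w = 1/v + 1"
  shows "NatExt b (w,z) = NatExt b (v, z+1)"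
proof -
  have "\<lfloor>1/w+1-b\<rfloor> = \<lfloor>1/v+1-b\<rfloor> + 1"
  proof -
    have "1/w+1-b = (1/v+1-b) + of_int 1" using assms(3) by simp
    thus ?thesis by (simp only: floor_add_int[symmetric])
  qed
  thus ?thesis using NE_eq[OF assms(1)] NE_eq[OF assms(2)] assms(3) by (simp add: algebra_simps)
qed

lemma fp2: "(f^^2) s = f (f s)" by (simp add: numeral_2_eq_2)

lemma stepA:
  assumes g: "(sqrt 5 - 1)/2 \<le> a" and ab: "a < b" "b \<le> 1" and p: "p \<in> D a"
    and sS: "s \<in> Sset p" and sb: "b - 1 \<le> fst s" "fst s < b"
  shows "(\<exists>k\<ge>1. (NatExt b ^^ k) s \<in> Sset (NatExt a p)) \<or>
         (1 - 1/sqrt 2 \<le> snd (NatExt a p) \<and> (\<exists>k\<ge>1. (NatExt b ^^ k) s \<in> Sset (NatExt a (NatExt a p))))"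
proof -
  obtain x y where pxy: "p = (x,y)" by (cases p)
  have a6: "0.6 < a" and aa: "1 \<le> a + a*a" using g_facts[OF g] by auto
  have a1: "a < 1" using ab by simp
  have ab3: "1 < a + b" "b \<le> a + 1" using a6 ab by linarith+
  note s2 = s2_facts
  have Dx: "a - 1 \<le> x" "x \<le> a" "1 - sqrt 2 \<le> y" "y \<le> sqrt 2" "0 \<le> x \<or> y \<le> 2 - sqrt 2"
     "x \<le> 1/2 \<or> 1/sqrt 2 - 1 \<le> y" using p pxy by (auto simp: D_mem)
  have NpD: "NatExt a p \<in> D a" using D_inv[OF g a1 p] .
  obtain s1 s2' where s12: "s = (s1, s2')" by (cases s)
  show ?thesis
  proof (cases "x = 0")
    case True
    hence "s1 = 0" "s2' = y \<or> s2' = -y" using sS sb ab s12 pxy by (auto simp: S_mem)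
    hence "NatExt b s = (0,0)" using s12 by (auto simp: NE0)
    moreover have "NatExt a p = (0,0)" using True pxy by (simp add: NE0)
    ultimately have "(NatExt b ^^ 1) s \<in> Sset (NatExt a p)" by (simp add: Sset_def)
    thus ?thesis by blast
  next
    case xnz: False
    have nz: "y + of_int \<lfloor>1/x+1-a\<rfloor> \<noteq> 0" using nzD[OF g a1 p[unfolded pxy] xnz] .
    from sS consider "s = (x,y)" | "s = (-x,-y)" | "s = (x+1, y/(1-y))" | "s = (1-x, -y/(y+1))"
      unfolding pxy Sset_def Let_def by auto
    then show ?thesis
    proof cases
      case 1
      have "(NatExt b ^^ 1) s \<in> Sset (NatExt a p)" using case0[OF ab(1) ab3(2) nz] 1 pxy by simp
      thus ?thesis by blast
    next
      case 2
      have "(NatExt b ^^ 1) s \<in> Sset (NatExt a p)" using case1[OF ab ab3(1) xnz nz] 2 pxy by simp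
      thus ?thesis by blast
    next
      case 3
      have xn: "x < 0" using sb 3 ab by simp
      have y1: "y \<noteq> 1" using Dx(5) xn s2 by linarith
      have x1: "0 < x + 1" using Dx(1) a6 by linarith
      have "NatExt b s = (1/(x+1) - of_int 1, 1/(y/(1-y) + of_int 1))"
        unfolding 3
      proof (rule NE_digit)
        show "x + 1 \<noteq> 0" using x1 by simp
        have "1 < 1/(x+1)" using x1 xn by (simp add: field_simps)
        thus "of_int 1 \<le> 1/(x+1) + 1 - b" using ab by simp
        have "1/(x+1) \<le> 1/a" using x1 Dx(1) a6 by (intro rpos) auto
        moreover have "1/a \<le> 1 + a" using aa a6 by (simp add: field_simps)
        ultimately show "1/(x+1) + 1 - b < of_int 1 + 1" using ab by simp
      qed
      also have "\<dots> = (-x/(1+x), 1-y)"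
      proof -
        have "1/(x+1) - 1 = -x/(1+x)" using x1 by (simp add: field_simps)
        moreover have "y/(1-y) + 1 = 1/(1-y)" using y1 by (simp add: field_simps)
        ultimately show ?thesis by simp
      qed
      finally have "(NatExt b ^^ 2) s \<in> Sset (NatExt a p)"
        using L2[OF ab ab3(1) xnz _ nz] x1 pxy by (simp add: fp2 add.commute)
      thus ?thesis by (intro disjI1 exI[of _ 2]) simp
    next
      case 4
      have xp: "0 < x" using sb 4 ab by simp
      have yp: "0 < y + 1" using Dx(3) s2 by linarith
      define d where "d = \<lfloor>1/x+1-a\<rfloor>"
      have db: "of_int d \<le> 1/x+1-a" "1/x+1-a < of_int d + 1" unfolding d_def by linarith+
      have d1: "1 \<le> d" using pos_digit[OF g a1 xp Dx(2)] d_def by simp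
      have NA: "NatExt a p = (1/x - d, 1/(y+d))" using NE_eq[OF xnz] d_def pxy by simp
      define v where "v = 1/x - 1"
      have vp: "0 < v" using xp Dx(2) a1 unfolding v_def by (simp add: field_simps)
      have Nv: "NatExt b s = NatExt b (v, 1/(y+1))"
      proof -
        have "NatExt b s = NatExt b (v, -y/(y+1) + 1)" unfolding 4
          by (rule NE_shift) (use xp Dx(2) a1 vp in \<open>auto simp: v_def field_simps\<close>)
        moreover have "-y/(y+1) + 1 = 1/(y+1)" using yp by (simp add: field_simps)
        ultimately show ?thesis by simp
      qed
      show ?thesis
      proof (cases "d = 1")
        case True
        have Nv2: "NatExt b s = NatExt b (NatExt a p)" unfolding Nv NA v_def using True by simp
        obtain q1 q2 where q: "NatExt a p = (q1,q2)" by fastforce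
        have "NatExt b (q1,q2) \<in> Sset (NatExt a (q1,q2))"
        proof (rule case0[OF ab(1) ab3(2)])
          show "q1 \<noteq> 0 \<Longrightarrow> q2 + of_int \<lfloor>1/q1+1-a\<rfloor> \<noteq> 0"
            using nzD[OF g a1] NpD q by simp
        qed
        hence A: "(NatExt b ^^ 1) s \<in> Sset (NatExt a (NatExt a p))" using Nv2 q by simp
        have "y + 1 \<le> 1 + sqrt 2" using Dx(4) by simp
        hence "1/(1 + sqrt 2) \<le> 1/(y+1)" using yp by (intro rpos) auto
        moreover have "1 - 1/sqrt 2 \<le> 1/(1 + sqrt 2)"
        proof -
          have "1/(1+sqrt 2) = sqrt 2 - 1" using s2 by (simp add: field_simps)
          moreover have "1/sqrt 2 = sqrt 2 / 2" using s2 by (simp add: field_simps)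
          ultimately show ?thesis using s2 by simp
        qed
        ultimately have "1 - 1/sqrt 2 \<le> snd (NatExt a p)" unfolding NA using True by simp
        thus ?thesis using A by blast
      next
        case False
        hence d2: "2 \<le> d" using d1 by simp
        have va: "a \<le> v" using db d2 unfolding v_def by linarith
        show ?thesis
        proof (cases "1/v < b")
          case True
          have N1: "NatExt b s = (1/v, y+1)"
          proof -
            have iv: "0 < 1/v" using vp by simp
            have "NatExt b s = (1/v - of_int 0, 1/(1/(y+1) + of_int 0))" unfolding Nv
              by (rule NE_digit) (use vp True ab iv in \<open>simp; linarith\<close>)+
            thus ?thesis by simp
          qed
          have Nav: "NatExt a (1/v, y+1) = NatExt a p"
          proof -
            have "NatExt a (1/v, y+1) = (1/(1/v) - of_int (d-1), 1/(y+1 + of_int (d-1)))"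
            proof (rule NE_digit)
              have vv: "1/(1/v) = 1/x - 1" using vp by (simp add: v_def)
              show "1/v \<noteq> 0" using vp by simp
              show "of_int (d-1) \<le> 1/(1/v)+1-a" unfolding vv using db by simp
              show "1/(1/v)+1-a < of_int (d-1) + 1" unfolding vv using db by simp
            qed
            thus ?thesis unfolding NA v_def by (simp add: algebra_simps)
          qed
          have "NatExt b (1/v, y+1) \<in> Sset (NatExt a (1/v, y+1))"
          proof (rule case0[OF ab(1) ab3(2)])
            have "\<lfloor>1/(1/v)+1-a\<rfloor> = d - 1" using db vp unfolding v_def by (simp add: floor_eq_iff)
            moreover have "y + of_int d \<noteq> 0" using nz d_def by simp
            ultimately show "y + 1 + of_int \<lfloor>1/(1/v)+1-a\<rfloor> \<noteq> 0" by simp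
          qed
          hence "(NatExt b ^^ 2) s \<in> Sset (NatExt a p)" using N1 Nav by (simp add: fp2)
          thus ?thesis by (intro disjI1 exI[of _ 2]) simp
        next
          case c2: False
          have dd: "d = 2"
          proof (rule ccontr)
            assume "d \<noteq> 2"
            hence "3 \<le> d" using d2 by simp
            hence "1 + a \<le> v" using db unfolding v_def by linarith
            hence "1/v \<le> 1/(1+a)" using a6 by (intro rpos) auto
            moreover have "1/(1+a) \<le> a" using aa a6 by (simp add: field_simps)
            ultimately show False using c2 ab by linarith
          qed
          define xp' where "xp' = 1/x - 2"
          have vx: "v = 1 + xp'" unfolding v_def xp'_def by simp
          have x1': "0 < 1 + xp'" using vp vx by simp
          have NA2: "NatExt a p = (xp', 1/(y+2))" using NA dd xp'_def by simp
          have N1: "NatExt b s = (-xp'/(1+xp'), 1 - 1/(y+2))"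
          proof -
            have "NatExt b s = (1/v - of_int 1, 1/(1/(y+1) + of_int 1))" unfolding Nv
            proof (rule NE_digit)
              show "v \<noteq> 0" using vp by simp
              show "of_int 1 \<le> 1/v + 1 - b" using c2 by simp
              have "1/v \<le> 1/a" using va a6 by (intro rpos) auto
              moreover have "1/a \<le> 1 + a" using aa a6 by (simp add: field_simps)
              ultimately show "1/v + 1 - b < of_int 1 + 1" using ab by simp
            qed
            moreover have "1/v - 1 = -xp'/(1+xp')" unfolding vx using x1' by (simp add: field_simps)
            moreover have "1/(1/(y+1) + 1) = 1 - 1/(y+2)" using yp by (simp add: field_simps)
            ultimately show ?thesis by simp
          qed
          have A: "(NatExt b ^^ 2) s \<in> Sset (NatExt a (NatExt a p))"
          proof (cases "xp' = 0")
            case True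
            thus ?thesis unfolding fp2 N1 NA2 using True by (simp add: NE0 Sset_def)
          next
            case False
            have "y + 2 + 0 \<noteq> 0 \<or> True" by simp
            have nz2: "1/(y+2) + of_int \<lfloor>1/xp'+1-a\<rfloor> \<noteq> 0"
              using nzD[OF g a1 _ False] NpD NA2 by simp
            show ?thesis unfolding fp2 N1 NA2
              by (rule L2[OF ab ab3(1) False _ nz2]) (use x1' in simp)
          qed
          have "y + 2 \<le> 2 + sqrt 2" using Dx(4) by simp
          hence "1/(2 + sqrt 2) \<le> 1/(y+2)" using yp by (intro rpos) auto
          moreover have "1 - 1/sqrt 2 = 1/(2 + sqrt 2)"
          proof -
            have "1/(2+sqrt 2) = 1 - sqrt 2 / 2" using s2 by (simp add: field_simps)
            moreover have "1/sqrt 2 = sqrt 2 / 2" using s2 by (simp add: field_simps)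
            ultimately show ?thesis by simp
          qed
          ultimately have "1 - 1/sqrt 2 \<le> snd (NatExt a p)" unfolding NA2 by simp
          thus ?thesis using A by (intro disjI2 conjI exI[of _ 2]) simp_all
        qed
      qed
    qed
  qed
qed


theorem lemma4p4:
  fixes a b x y xt yt :: real and n :: nat
  assumes "(sqrt 5 - 1) / 2 \<le> a" and "a < b" and "b \<le> 1"
    and "(x, y) \<in> Omega a"
    and "(xt, yt) \<in> Sset (x, y)"
    and "n \<ge> 1"
    and "b - 1 \<le> xt" and "xt < b"
    and "snd ((NatExt a ^^ n) (x, y)) < 1 - 1 / sqrt 2"
  shows "\<exists>k\<ge>1. (NatExt b ^^ k) (xt, yt) \<in> Sset ((NatExt a ^^ n) (x, y))"
proof -
  note g = assms(1)
  have a6: "0.6 < a" using g_facts[OF g] by simp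
  have a1: "a < 1" using assms(2,3) by simp
  define s where "s = (xt, yt)"
  define X where "X m = (NatExt a ^^ m) (x, y)" for m
  define P where "P m = ((\<exists>k\<ge>1. (NatExt b ^^ k) s \<in> Sset (X m)) \<or>
      (1 - 1/sqrt 2 \<le> snd (X m) \<and> (\<exists>k\<ge>1. (NatExt b ^^ k) s \<in> Sset (X (Suc m)))))" for m
  have p0: "(x,y) \<in> D a" using Omega_D[OF g a1] assms(4) by blast
  have XD: "X m \<in> D a" for m
  proof (induction m)
    case 0 thus ?case using p0 by (simp add: X_def)
  next
    case (Suc m) thus ?case using D_inv[OF g a1] by (simp add: X_def)
  qed
  have XS: "X (Suc m) = NatExt a (X m)" for m by (simp add: X_def)
  have rng: "b - 1 \<le> fst ((NatExt b ^^ k) s) \<and> fst ((NatExt b ^^ k) s) < b" if "1 \<le> k" for k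
  proof -
    define j where "j = k - 1"
    have "k = Suc j" using that unfolding j_def by simp
    thus ?thesis using NE_range[of b "(NatExt b ^^ j) s"] a6 assms(2,3) by simp
  qed
  have "P m" if "1 \<le> m" for m
    using that
  proof (induction m rule: nat_induct_at_least)
    case base
    have "(\<exists>k\<ge>1. (NatExt b ^^ k) s \<in> Sset (NatExt a (X 0))) \<or>
         (1 - 1/sqrt 2 \<le> snd (NatExt a (X 0)) \<and> (\<exists>k\<ge>1. (NatExt b ^^ k) s \<in> Sset (NatExt a (NatExt a (X 0)))))"
      by (rule stepA[OF g assms(2,3) XD]) (use assms(5,7,8) in \<open>simp_all add: s_def X_def\<close>)
    thus ?case unfolding P_def XS[symmetric] by simp
  next
    case (Suc m)
    from Suc.IH[unfolded P_def] show ?case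
    proof
      assume "\<exists>k\<ge>1. (NatExt b ^^ k) s \<in> Sset (X m)"
      then obtain k where k: "1 \<le> k" "(NatExt b ^^ k) s \<in> Sset (X m)" by blast
      have st: "(\<exists>j\<ge>1. (NatExt b ^^ j) ((NatExt b ^^ k) s) \<in> Sset (NatExt a (X m))) \<or>
         (1 - 1/sqrt 2 \<le> snd (NatExt a (X m)) \<and> (\<exists>j\<ge>1. (NatExt b ^^ j) ((NatExt b ^^ k) s) \<in> Sset (NatExt a (NatExt a (X m)))))"
        by (rule stepA[OF g assms(2,3) XD k(2)]) (use rng[OF k(1)] in auto)
      have comp: "(NatExt b ^^ j) ((NatExt b ^^ k) s) = (NatExt b ^^ (j + k)) s" for j
        by (simp add: funpow_add)
      from st show ?thesis
      proof
        assume "\<exists>j\<ge>1. (NatExt b ^^ j) ((NatExt b ^^ k) s) \<in> Sset (NatExt a (X m))"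
        then obtain j where j: "1 \<le> j" "(NatExt b ^^ (j + k)) s \<in> Sset (X (Suc m))"
          unfolding comp XS by blast
        have "1 \<le> j + k" using j(1) by simp
        thus ?thesis unfolding P_def using j(2) by blast
      next
        assume A: "1 - 1/sqrt 2 \<le> snd (NatExt a (X m)) \<and> (\<exists>j\<ge>1. (NatExt b ^^ j) ((NatExt b ^^ k) s) \<in> Sset (NatExt a (NatExt a (X m))))"
        then obtain j where j: "1 \<le> j" "(NatExt b ^^ (j + k)) s \<in> Sset (X (Suc (Suc m)))"
          unfolding comp XS by blast
        have "1 \<le> j + k" using j(1) by simp
        moreover have "1 - 1/sqrt 2 \<le> snd (X (Suc m))" using A XS by simp
        ultimately show ?thesis unfolding P_def using j(2) by blast
      qed
    next
      assume "1 - 1/sqrt 2 \<le> snd (X m) \<and> (\<exists>k\<ge>1. (NatExt b ^^ k) s \<in> Sset (X (Suc m)))"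
      thus ?thesis unfolding P_def by blast
    qed
  qed
  hence "P n" using assms(6) by blast
  moreover have "\<not> (1 - 1/sqrt 2 \<le> snd (X n))" using assms(9) by (simp add: X_def)
  ultimately show ?thesis unfolding P_def s_def X_def by blast
qed

end
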